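(* For every prime $p$ with $\gcd(120,p)=1$, the group $SL(2,5)\times\mathbb{Z}_p$ is $\psi$-normal divisible.
   Context: For a finite group $G$, $\psi(G)=\sum_{x\in G} o(x)$ denotes the sum of the orders of all elements of $G$. A finite group $G$ is called $\psi$-normal divisible if $\psi(H)$ divides $\psi(G)$ for every normal subgroup $H$ of $G$. $SL(2,5)$ is the special linear group of $2\times 2$ matrices of determinant $1$ over the field with $5$ elements (order $120$). *)

theory Defs
  imports "HOL-Algebra.Algebra"
begin

text \<open>Special linear group SL(2, Z/nZ): a 2x2 matrix [[a,b],[c,d]] is encoded as the
  tuple (a,b,c,d) of residues in {0..n-1}; the group operation is matrix multiplication
  reduced mod n.\<close>
definition SL2_mod :: "int \<Rightarrow> (int \<times> int \<times> int \<times> int) monoid" where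
  "SL2_mod n = \<lparr> carrier = {(x1,x2,x3,x4). x1 \<in> {0..<n} \<and> x2 \<in> {0..<n} \<and> x3 \<in> {0..<n} \<and> x4 \<in> {0..<n}
                                   \<and> (x1*x4 - x2*x3) mod n = 1 mod n},
               monoid.mult = (\<lambda>x y. case (x, y) of ((x1,x2,x3,x4), (y1,y2,y3,y4)) \<Rightarrow>
                  ((x1*y1 + x2*y3) mod n, (x1*y2 + x2*y4) mod n,
                   (x3*y1 + x4*y3) mod n, (x3*y2 + x4*y4) mod n)),
               one = (1 mod n, 0, 0, 1 mod n) \<rparr>"

definition psi :: "('a, 'b) monoid_scheme \<Rightarrow> nat" where
  "psi G = (\<Sum>x\<in>carrier G. group.ord G x)"

definition psi_normal_divisible :: "('a, 'b) monoid_scheme \<Rightarrow> bool" where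
  "psi_normal_divisible G \<longleftrightarrow> (\<forall>H. H \<lhd> G \<longrightarrow> psi (G\<lparr>carrier := H\<rparr>) dvd psi G)"

end

theory Submission
  imports Defs "HOL-Computational_Algebra.Primes"
begin


type_synonym m4 = "int \<times> int \<times> int \<times> int"

definition mm :: "m4 \<Rightarrow> m4 \<Rightarrow> m4" where
  "mm x y = (case (x, y) of ((x1,x2,x3,x4), (y1,y2,y3,y4)) \<Rightarrow>
                  ((x1*y1 + x2*y3) mod 5, (x1*y2 + x2*y4) mod 5,
                   (x3*y1 + x4*y3) mod 5, (x3*y2 + x4*y4) mod 5))"

fun pw :: "m4 \<Rightarrow> nat \<Rightarrow> m4" where
  "pw x 0 = (1,0,0,1)"
| "pw x (Suc n) = mm (pw x n) x"

definition inC :: "m4 \<Rightarrow> bool" where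
  "inC t = (case t of (x1,x2,x3,x4) \<Rightarrow> x1 \<in> {0..<5} \<and> x2 \<in> {0..<5} \<and> x3 \<in> {0..<5} \<and> x4 \<in> {0..<5}
                                   \<and> (x1*x4 - x2*x3) mod 5 = 1)"

definition L :: "m4 list" where
  "L = filter inC [(a,b,c,d). a \<leftarrow> [0..4], b \<leftarrow> [0..4], c \<leftarrow> [0..4], d \<leftarrow> [0..4]]"

definition ordc :: "m4 \<Rightarrow> nat" where
  "ordc x = hd (filter (\<lambda>k. pw x k = (1,0,0,1)) [1..<11])"

definition rep :: "nat \<Rightarrow> m4" where
  "rep k = (if k = 1 then (1,0,0,1) else if k = 2 then (4,0,0,4) else if k = 3 then (0,1,4,4)
     else if k = 4 then (0,1,4,0) else if k = 5 then (0,1,4,2) else if k = 6 then (0,1,4,1) else (0,1,4,3))"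

definition T :: "(m4 \<times> m4 \<times> nat \<times> m4 \<times> nat) list" where
  "T = [
  ((0,1,4,0),(0,1,4,0),1,(0,1,4,0),1),
  ((0,1,4,1),(0,1,4,1),1,(0,1,4,1),1),
  ((0,1,4,2),(0,1,4,2),1,(0,1,4,2),1),
  ((0,1,4,3),(0,1,4,3),1,(0,1,4,3),1),
  ((0,1,4,4),(0,1,4,4),1,(0,1,4,4),1),
  ((0,2,2,0),(2,1,2,4),1,(1,1,2,3),1),
  ((0,2,2,1),(1,1,2,3),1,(1,2,4,4),1),
  ((0,2,2,2),(0,1,4,3),2,(0,1,4,4),2),
  ((0,2,2,3),(0,2,2,2),3,(0,2,2,1),3),
  ((0,2,2,4),(1,3,1,4),1,(1,3,1,4),1),
  ((0,3,3,0),(1,2,1,3),1,(2,2,1,4),1),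
  ((0,3,3,1),(1,1,3,4),1,(1,1,3,4),1),
  ((0,3,3,2),(0,2,2,1),2,(0,2,2,2),2),
  ((0,3,3,3),(0,1,4,1),3,(0,1,4,2),3),
  ((0,3,3,4),(1,4,2,4),1,(1,2,1,3),1),
  ((0,4,1,0),(0,2,2,0),1,(0,2,2,0),1),
  ((0,4,1,1),(0,2,2,2),1,(0,2,2,3),1),
  ((0,4,1,2),(0,2,2,4),1,(0,2,2,1),1),
  ((0,4,1,3),(0,2,2,1),1,(0,2,2,4),1),
  ((0,4,1,4),(0,2,2,3),1,(0,2,2,2),1),
  ((1,0,0,1),(0,1,4,0),1,(0,1,4,0),1),
  ((1,0,1,1),(0,2,2,2),1,(2,3,0,3),1),
  ((1,0,2,1),(0,1,4,1),2,(2,3,0,3),2),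
  ((1,0,3,1),(0,2,2,2),2,(1,4,0,1),2),
  ((1,0,4,1),(0,1,4,1),1,(1,4,0,1),1),
  ((1,1,0,1),(1,0,1,1),1,(0,1,4,1),1),
  ((1,1,1,2),(0,2,2,4),1,(0,1,4,2),1),
  ((1,1,2,3),(1,0,1,1),1,(0,1,4,3),1),
  ((1,1,3,4),(1,0,1,1),1,(0,1,4,4),1),
  ((1,1,4,0),(0,1,4,0),1,(0,1,4,0),1),
  ((1,2,0,1),(2,0,2,3),2,(0,1,4,1),2),
  ((1,2,1,3),(0,2,2,1),1,(1,3,3,0),1),
  ((1,2,2,0),(1,3,2,2),1,(1,2,1,3),1),
  ((1,2,3,2),(0,1,4,3),3,(0,2,2,0),3),
  ((1,2,4,4),(0,1,4,4),1,(1,1,4,0),1),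
  ((1,3,0,1),(1,0,1,1),2,(0,2,2,3),2),
  ((1,3,1,4),(0,2,2,3),1,(2,2,2,0),1),
  ((1,3,2,2),(0,2,2,1),3,(0,1,4,0),3),
  ((1,3,3,0),(1,4,3,3),1,(1,1,1,2),1),
  ((1,3,4,3),(0,1,4,3),1,(1,2,4,4),1),
  ((1,4,0,1),(2,0,2,3),1,(0,2,2,3),1),
  ((1,4,1,0),(0,2,2,0),1,(0,2,2,0),1),
  ((1,4,2,4),(2,0,2,3),1,(0,2,2,2),1),
  ((1,4,3,3),(1,2,2,0),1,(0,2,2,4),1),
  ((1,4,4,2),(0,1,4,2),1,(0,2,2,1),1),
  ((2,0,0,3),(1,1,2,3),1,(1,3,4,3),1),
  ((2,0,1,3),(0,2,2,1),1,(1,3,3,0),1),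
  ((2,0,2,3),(2,2,3,1),1,(1,3,2,2),1),
  ((2,0,3,3),(1,3,1,4),1,(1,3,1,4),1),
  ((2,0,4,3),(0,1,4,3),1,(1,3,0,1),1),
  ((2,1,0,3),(1,0,2,1),1,(0,1,4,3),1),
  ((2,1,1,1),(0,2,2,2),1,(0,1,4,1),1),
  ((2,1,2,4),(1,0,2,1),1,(0,1,4,4),1),
  ((2,1,3,2),(1,0,2,1),1,(0,1,4,2),1),
  ((2,1,4,0),(0,1,4,0),1,(0,1,4,0),1),
  ((2,2,0,3),(1,4,2,4),1,(1,1,1,2),1),
  ((2,2,1,4),(0,2,2,3),1,(1,2,3,2),1),
  ((2,2,2,0),(0,1,4,4),2,(0,1,4,3),2),
  ((2,2,3,1),(0,1,4,0),3,(0,2,2,4),3),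
  ((2,2,4,2),(0,1,4,2),1,(1,3,0,1),1),
  ((2,3,0,3),(1,3,2,2),1,(2,2,3,1),1),
  ((2,3,1,2),(0,2,2,4),1,(1,2,2,0),1),
  ((2,3,2,1),(0,2,2,0),3,(0,1,4,3),3),
  ((2,3,3,0),(0,2,2,3),2,(0,2,2,4),2),
  ((2,3,4,4),(0,1,4,4),1,(1,1,4,0),1),
  ((2,4,0,3),(1,2,2,0),1,(0,2,2,4),1),
  ((2,4,1,0),(0,2,2,0),1,(0,2,2,0),1),
  ((2,4,2,2),(1,2,1,3),1,(0,2,2,1),1),
  ((2,4,3,4),(1,2,3,2),1,(0,2,2,2),1),
  ((2,4,4,1),(0,1,4,1),1,(0,2,2,3),1),
  ((3,0,0,2),(1,4,3,3),1,(1,2,1,3),1),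
  ((3,0,1,2),(0,2,2,4),1,(1,2,2,0),1),
  ((3,0,2,2),(2,1,3,2),1,(1,2,3,2),1),
  ((3,0,3,2),(1,1,1,2),1,(1,2,4,4),1),
  ((3,0,4,2),(0,1,4,2),1,(1,2,0,1),1),
  ((3,1,0,2),(1,0,3,1),1,(0,1,4,2),1),
  ((3,1,1,4),(0,2,2,3),1,(0,1,4,4),1),
  ((3,1,2,1),(1,0,3,1),1,(0,1,4,1),1),
  ((3,1,3,3),(1,0,3,1),1,(0,1,4,3),1),
  ((3,1,4,0),(0,1,4,0),1,(0,1,4,0),1),
  ((3,2,0,2),(1,1,3,4),1,(1,1,3,4),1),
  ((3,2,1,1),(0,2,2,2),1,(1,3,2,2),1),
  ((3,2,2,0),(0,2,2,4),3,(0,2,2,3),3),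
  ((3,2,3,4),(0,2,2,4),2,(0,1,4,0),2),
  ((3,2,4,3),(0,1,4,3),1,(1,2,0,1),1),
  ((3,3,0,2),(1,2,3,2),1,(2,2,4,2),1),
  ((3,3,1,3),(0,2,2,1),1,(1,1,2,3),1),
  ((3,3,2,4),(0,1,4,2),2,(0,2,2,0),2),
  ((3,3,3,0),(0,1,4,2),3,(0,1,4,1),3),
  ((3,3,4,1),(0,1,4,1),1,(1,2,0,1),1),
  ((3,4,0,2),(1,3,3,0),1,(0,2,2,1),1),
  ((3,4,1,0),(0,2,2,0),1,(0,2,2,0),1),
  ((3,4,2,3),(1,2,2,0),1,(0,2,2,4),1),
  ((3,4,3,1),(1,3,2,2),1,(0,2,2,3),1),
  ((3,4,4,4),(0,1,4,4),1,(0,2,2,2),1),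
  ((4,0,0,4),(0,1,4,0),1,(0,1,4,0),1),
  ((4,0,1,4),(0,2,2,3),1,(2,2,0,3),1),
  ((4,0,2,4),(0,2,2,3),3,(1,1,0,1),3),
  ((4,0,3,4),(0,1,4,4),3,(2,2,0,3),3),
  ((4,0,4,4),(0,1,4,4),1,(1,1,0,1),1),
  ((4,1,0,4),(1,0,4,1),1,(0,1,4,4),1),
  ((4,1,1,3),(0,2,2,1),1,(0,1,4,3),1),
  ((4,1,2,2),(1,0,4,1),1,(0,1,4,2),1),
  ((4,1,3,1),(1,0,4,1),1,(0,1,4,1),1),
  ((4,1,4,0),(0,1,4,0),1,(0,1,4,0),1),
  ((4,2,0,4),(1,0,4,1),3,(0,2,2,2),3),
  ((4,2,1,2),(0,2,2,4),1,(1,2,2,0),1),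
  ((4,2,2,0),(1,1,1,2),1,(1,3,4,3),1),
  ((4,2,3,3),(0,2,2,0),2,(0,1,4,2),2),
  ((4,2,4,1),(0,1,4,1),1,(1,1,0,1),1),
  ((4,3,0,4),(2,0,3,3),3,(0,1,4,4),3),
  ((4,3,1,1),(0,2,2,2),1,(2,2,0,3),1),
  ((4,3,2,3),(0,1,4,0),2,(0,2,2,1),2),
  ((4,3,3,0),(1,1,2,3),1,(1,2,3,2),1),
  ((4,3,4,2),(0,1,4,2),1,(1,1,0,1),1),
  ((4,4,0,4),(2,0,3,3),1,(0,2,2,2),1),
  ((4,4,1,0),(0,2,2,0),1,(0,2,2,0),1),
  ((4,4,2,1),(2,0,3,3),1,(0,2,2,3),1),
  ((4,4,3,2),(1,3,3,0),1,(0,2,2,1),1),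
  ((4,4,4,3),(0,1,4,3),1,(0,2,2,4),1)]"

lemma c1: "map fst T = L" by code_simp
lemma c2: "list_all (\<lambda>(x,g,e,h,f). inC g \<and> inC h \<and> mm (rep (ordc x)) g = mm g (pw x e)
   \<and> mm x h = mm h (pw (rep (ordc x)) f)) T" by code_simp
lemma c3: "list_all (\<lambda>x. pw x (ordc x) = (1,0,0,1) \<and> (\<forall>j\<in>set [1..<ordc x]. pw x j \<noteq> (1,0,0,1)) \<and> ordc x dvd 120) L" by code_simp
lemma c5: "distinct L" by code_simp
lemma c6: "length L = 120" by code_simp
definition OL :: "nat list" where "OL = [4,6,5,10,3,4,6,5,10,3,4,6,5,10,3,4,6,5,10,3,1,5,5,5,5,5,10,3,4,6,5,3,6,10,4,5,4,10,6,3,5,6,4,3,10,4,4,4,4,4,4,10,6,3,5,4,6,5,10,3,4,3,10,5,6,4,5,3,6,10,4,4,4,4,4,4,5,3,6,10,4,3,10,5,6,4,6,5,10,3,4,10,6,3,5,2,10,10,10,10,10,5,6,4,3,10,6,3,5,4,10,4,5,3,6,10,3,4,6,5]"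

lemma c8: "map ordc L = OL" unfolding OL_def by code_simp
lemma c7: "\<forall>Ol \<in> set (subseqs [1,2,3,4,5,6,10::nat]). 1 \<in> set Ol \<longrightarrow> 120 mod length (filter (\<lambda>k. k \<in> set Ol) OL) = 0 \<longrightarrow>
   Ol = [1] \<or> Ol = [1,2] \<or> Ol = [1,2,3,4,5,6,10]" unfolding OL_def by code_simp
lemma c9: "sum_list (filter (\<lambda>k. k \<in> set [1]) OL) = 1" "sum_list (filter (\<lambda>k. k \<in> set [1,2]) OL) = 3"
  "sum_list (filter (\<lambda>k. k \<in> set [1,2,3,4,5,6,10]) OL) = 663" "sum_list OL = 663"
  unfolding OL_def by code_simp+
lemma c10: "set OL = {1,2,3,4,5,6,10}" unfolding OL_def by code_simp


abbreviation "A \<equiv> SL2_mod 5"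

lemma inC_iff: "inC (x1,x2,x3,x4) \<longleftrightarrow> x1 \<in> {0..<5} \<and> x2 \<in> {0..<5} \<and> x3 \<in> {0..<5} \<and> x4 \<in> {0..<5} \<and> (x1*x4 - x2*x3) mod 5 = 1"
  by (simp add: inC_def)

lemma carrA: "x \<in> carrier A \<longleftrightarrow> inC x"
  by (cases x) (auto simp: SL2_mod_def inC_def)

lemma multA: "x \<otimes>\<^bsub>A\<^esub> y = mm x y"
  by (simp add: SL2_mod_def mm_def)

lemma oneA: "\<one>\<^bsub>A\<^esub> = (1,0,0,1)"
  by (simp add: SL2_mod_def)

lemma powA: "x [^]\<^bsub>A\<^esub> (n::nat) = pw x n"
  by (induction n) (simp_all add: nat_pow_def multA oneA)

lemma setL: "set L = {x. inC x}"
proof -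
  have "inC x \<Longrightarrow> x \<in> set [(a,b,c,d). a \<leftarrow> [0..4], b \<leftarrow> [0..4], c \<leftarrow> [0..4], d \<leftarrow> [0..4]]" for x
    by (cases x) (force simp: inC_def)
  then show ?thesis unfolding L_def by auto
qed

lemma carrL: "carrier A = set L"
  using carrA setL by auto

lemma hD: "(a mod n * (b mod n) - c mod n * (d mod n)) mod (n::int) = (a*b - c*d) mod n"
proof -
  have "(a mod n * (b mod n) - c mod n * (d mod n)) mod n = ((a mod n * (b mod n)) mod n - (c mod n * (d mod n)) mod n) mod n"
    by (rule mod_diff_eq[symmetric])
  also have "(a mod n * (b mod n)) mod n = (a*b) mod n" by (rule mod_mult_eq)
  also have "(c mod n * (d mod n)) mod n = (c*d) mod n" by (rule mod_mult_eq)
  also have "((a*b) mod n - (c*d) mod n) mod n = (a*b - c*d) mod n" by (rule mod_diff_eq)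
  finally show ?thesis .
qed

lemma h1: "(a mod n * b + c mod n * d) mod (n::int) = (a*b + c*d) mod n"
proof -
  have "(a mod n * b + c mod n * d) mod n = ((a mod n * b) mod n + (c mod n * d) mod n) mod n"
    by (rule mod_add_eq[symmetric])
  also have "(a mod n * b) mod n = (a*b) mod n" by (rule mod_mult_left_eq)
  also have "(c mod n * d) mod n = (c*d) mod n" by (rule mod_mult_left_eq)
  also have "((a*b) mod n + (c*d) mod n) mod n = (a*b + c*d) mod n" by (rule mod_add_eq)
  finally show ?thesis .
qed

lemma h2: "(a * (b mod n) + c * (d mod n)) mod (n::int) = (a*b + c*d) mod n"
proof -
  have "(a * (b mod n) + c * (d mod n)) mod n = ((a * (b mod n)) mod n + (c * (d mod n)) mod n) mod n"
    by (rule mod_add_eq[symmetric])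
  also have "(a * (b mod n)) mod n = (a*b) mod n" by (rule mod_mult_right_eq)
  also have "(c * (d mod n)) mod n = (c*d) mod n" by (rule mod_mult_right_eq)
  also have "((a*b) mod n + (c*d) mod n) mod n = (a*b + c*d) mod n" by (rule mod_add_eq)
  finally show ?thesis .
qed

lemma mm_closed: "inC x \<Longrightarrow> inC y \<Longrightarrow> inC (mm x y)"
proof -
  assume "inC x" "inC y"
  obtain x1 x2 x3 x4 where x: "x = (x1,x2,x3,x4)" by (cases x) auto
  obtain y1 y2 y3 y4 where y: "y = (y1,y2,y3,y4)" by (cases y) auto
  have dx: "(x1*x4 - x2*x3) mod 5 = 1" and dy: "(y1*y4 - y2*y3) mod 5 = 1"
    using \<open>inC x\<close> \<open>inC y\<close> by (auto simp: x y inC_def)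
  have "(((x1*y1 + x2*y3) mod 5) * ((x3*y2 + x4*y4) mod 5) - ((x1*y2 + x2*y4) mod 5) * ((x3*y1 + x4*y3) mod 5)) mod 5
     = ((x1*y1 + x2*y3) * (x3*y2 + x4*y4) - (x1*y2 + x2*y4) * (x3*y1 + x4*y3)) mod 5"
    by (rule hD)
  also have "(x1*y1 + x2*y3) * (x3*y2 + x4*y4) - (x1*y2 + x2*y4) * (x3*y1 + x4*y3) = (x1*x4 - x2*x3) * (y1*y4 - y2*y3)"
    by (simp add: algebra_simps)
  also have "((x1*x4 - x2*x3) * (y1*y4 - y2*y3)) mod 5 = 1" by (simp add: mod_mult_eq[symmetric] dx dy)
  finally have det: "(((x1*y1 + x2*y3) mod 5) * ((x3*y2 + x4*y4) mod 5) - ((x1*y2 + x2*y4) mod 5) * ((x3*y1 + x4*y3) mod 5)) mod 5 = 1" .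
  have m: "mm x y = ((x1*y1 + x2*y3) mod 5, (x1*y2 + x2*y4) mod 5, (x3*y1 + x4*y3) mod 5, (x3*y2 + x4*y4) mod 5)"
    by (simp add: x y mm_def)
  show ?thesis unfolding m inC_iff
    by (intro conjI, simp_all only: atLeastLessThan_iff pos_mod_sign pos_mod_bound zero_less_numeral simp_thms) (rule det)
qed

lemma mm_assoc: "mm (mm x y) z = mm x (mm y z)"
proof -
  obtain x1 x2 x3 x4 where x: "x = (x1,x2,x3,x4)" by (cases x) auto
  obtain y1 y2 y3 y4 where y: "y = (y1,y2,y3,y4)" by (cases y) auto
  obtain z1 z2 z3 z4 where z: "z = (z1,z2,z3,z4)" by (cases z) auto
  have e1: "(x1*y1+x2*y3)*z1 + (x1*y2+x2*y4)*z3 = x1*(y1*z1+y2*z3) + x2*(y3*z1+y4*z3)" by (simp add: algebra_simps)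
  have e2: "(x1*y1+x2*y3)*z2 + (x1*y2+x2*y4)*z4 = x1*(y1*z2+y2*z4) + x2*(y3*z2+y4*z4)" by (simp add: algebra_simps)
  have e3: "(x3*y1+x4*y3)*z1 + (x3*y2+x4*y4)*z3 = x3*(y1*z1+y2*z3) + x4*(y3*z1+y4*z3)" by (simp add: algebra_simps)
  have e4: "(x3*y1+x4*y3)*z2 + (x3*y2+x4*y4)*z4 = x3*(y1*z2+y2*z4) + x4*(y3*z2+y4*z4)" by (simp add: algebra_simps)
  show ?thesis
    unfolding x y z mm_def by (simp only: prod.case h1 h2 e1 e2 e3 e4)
qed

lemma mm_one: "inC x \<Longrightarrow> mm (1,0,0,1) x = x"
  by (cases x) (auto simp: mm_def inC_def)

lemma hR: "(x + y mod n * z) mod (n::int) = (x + y*z) mod n"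
proof -
  have "(x + y mod n * z) mod n = (x + (y mod n * z) mod n) mod n" by (rule mod_add_right_eq[symmetric])
  also have "(y mod n * z) mod n = (y*z) mod n" by (rule mod_mult_left_eq)
  also have "(x + (y*z) mod n) mod n = (x + y*z) mod n" by (rule mod_add_right_eq)
  finally show ?thesis .
qed

lemma hL: "(y mod n * z + x) mod (n::int) = (y*z + x) mod n"
proof -
  have "(y mod n * z + x) mod n = ((y mod n * z) mod n + x) mod n" by (rule mod_add_left_eq[symmetric])
  also have "(y mod n * z) mod n = (y*z) mod n" by (rule mod_mult_left_eq)
  also have "((y*z) mod n + x) mod n = (y*z + x) mod n" by (rule mod_add_left_eq)
  finally show ?thesis .
qed

lemma mm_inv: "inC x \<Longrightarrow> \<exists>y. inC y \<and> mm y x = (1,0,0,1)"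
proof -
  assume "inC x"
  obtain u1 u2 u3 u4 where x: "x = (u1,u2,u3,u4)" by (cases x) auto
  have r1: "u1 \<in> {0..<5}" and r4: "u4 \<in> {0..<5}" and u4: "(u1*u4 - u2*u3) mod 5 = 1"
    using \<open>inC x\<close> unfolding x inC_iff by blast+
  have q1: "u4*u1 - (-u2)*(-u3) = u1*u4 - u2*u3" by (simp add: algebra_simps)
  have "(u4*u1 - (-u2) mod 5 * ((-u3) mod 5)) mod 5 = (u4*u1 - ((-u2) mod 5 * ((-u3) mod 5)) mod 5) mod 5"
    by (rule mod_diff_right_eq[symmetric])
  also have "((-u2) mod 5 * ((-u3) mod 5)) mod 5 = ((-u2) * (-u3)) mod 5" by (rule mod_mult_eq)
  also have "(u4*u1 - ((-u2) * (-u3)) mod 5) mod 5 = (u4*u1 - (-u2) * (-u3)) mod 5" by (rule mod_diff_right_eq)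
  also have "u4*u1 - (-u2) * (-u3) = u1*u4 - u2*u3" by (rule q1)
  finally have dety: "(u4*u1 - (-u2) mod 5 * ((-u3) mod 5)) mod 5 = 1" using u4 by (simp only:)
  have r2: "(-u2) mod 5 \<in> {0..<5}" and r3: "(-u3) mod 5 \<in> {0..<5}" by simp_all
  let ?y = "(u4, (-u2) mod 5, (-u3) mod 5, u1)"
  have "inC ?y" unfolding inC_iff using r1 r2 r3 r4 dety by blast
  moreover have "mm ?y x = (1,0,0,1)"
  proof -
    have q2: "u4*u1 + (-u2) * u3 = u1*u4 - u2*u3" by (simp add: algebra_simps)
    have "(u4*u1 + (-u2) mod 5 * u3) mod 5 = (u4*u1 + (-u2) * u3) mod 5"
      by (rule hR)
    also have "u4*u1 + (-u2) * u3 = u1*u4 - u2*u3" by (rule q2)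
    finally have a1: "(u4*u1 + (-u2) mod 5 * u3) mod 5 = 1" using u4 by (simp only:)
    have q3: "u4*u2 + (-u2) * u4 = 0" by (simp add: algebra_simps)
    have "(u4*u2 + (-u2) mod 5 * u4) mod 5 = (u4*u2 + (-u2) * u4) mod 5"
      by (rule hR)
    also have "u4*u2 + (-u2) * u4 = 0" by (rule q3)
    finally have a2: "(u4*u2 + (-u2) mod 5 * u4) mod 5 = 0" by simp
    have q4: "(-u3) * u1 + u1*u3 = 0" by (simp add: algebra_simps)
    have "((-u3) mod 5 * u1 + u1*u3) mod 5 = ((-u3) * u1 + u1*u3) mod 5"
      by (rule hL)
    also have "(-u3) * u1 + u1*u3 = 0" by (rule q4)
    finally have a3: "((-u3) mod 5 * u1 + u1*u3) mod 5 = 0" by simp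
    have q5: "(-u3) * u2 + u1*u4 = u1*u4 - u2*u3" by (simp add: algebra_simps)
    have "((-u3) mod 5 * u2 + u1*u4) mod 5 = ((-u3) * u2 + u1*u4) mod 5"
      by (rule hL)
    also have "(-u3) * u2 + u1*u4 = u1*u4 - u2*u3" by (rule q5)
    finally have a4: "((-u3) mod 5 * u2 + u1*u4) mod 5 = 1" using u4 by (simp only:)
    show ?thesis unfolding x mm_def prod.case a1 a2 a3 a4 ..
  qed
  ultimately show ?thesis by blast
qed

lemma groupA: "group A"
proof (rule groupI)
  show "\<one>\<^bsub>A\<^esub> \<in> carrier A" by (simp add: oneA carrA inC_def)
next
  fix x assume "x \<in> carrier A"
  then obtain y where "inC y" "mm y x = (1,0,0,1)" using mm_inv carrA by blast
  then show "\<exists>y\<in>carrier A. y \<otimes>\<^bsub>A\<^esub> x = \<one>\<^bsub>A\<^esub>" by (auto simp: carrA multA oneA)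
qed (auto simp: carrA multA oneA mm_closed mm_assoc mm_one)



lemma inL: "x \<in> carrier A \<Longrightarrow> x \<in> set L" using carrL by simp

lemma c3x: assumes "x \<in> carrier A"
  shows "pw x (ordc x) = (1,0,0,1)" "\<And>j. j \<in> set [1..<ordc x] \<Longrightarrow> pw x j \<noteq> (1,0,0,1)" "ordc x dvd 120"
  using c3 inL[OF assms] by (auto simp: list_all_iff)

lemma ordA: assumes x: "x \<in> carrier A" shows "group.ord A x = ordc x"
proof -
  have gA: "group A" by (rule groupA)
  have fin: "finite (carrier A)" by (simp add: carrL)
  note c = c3x[OF x]
  have pos: "ordc x > 0" using c(3) by (cases "ordc x") auto
  have "group.ord A x dvd ordc x" using group.pow_eq_id[OF gA x, of "ordc x"] c(1) by (simp add: powA oneA)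
  then have le: "group.ord A x \<le> ordc x" using pos by (simp add: dvd_imp_le)
  have ge: "group.ord A x \<ge> 1" using group.ord_ge_1[OF gA fin x] .
  have "x [^]\<^bsub>A\<^esub> group.ord A x = \<one>\<^bsub>A\<^esub>" using group.pow_ord_eq_1[OF gA x] .
  then have "pw x (group.ord A x) = (1,0,0,1)" by (simp add: powA oneA)
  then have "\<not> group.ord A x < ordc x" using c(2)[of "group.ord A x"] ge by auto
  with le show ?thesis by simp
qed

lemma orderA: "order A = 120"
  unfolding order_def carrL using c5 c6 by (simp add: distinct_card)

lemma wit: assumes "x \<in> carrier A"
  shows "\<exists>g e h f. inC g \<and> inC h \<and> mm (rep (ordc x)) g = mm g (pw x e) \<and> mm x h = mm h (pw (rep (ordc x)) f)"
proof -
  have "x \<in> set (map fst T)" using c1 inL[OF assms] by simp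
  then obtain t where t: "t \<in> set T" "fst t = x" by auto
  obtain x' g e h f where t': "t = (x',g,e,h,f)" by (cases t) auto
  have "inC g \<and> inC h \<and> mm (rep (ordc x)) g = mm g (pw x e) \<and> mm x h = mm h (pw (rep (ordc x)) f)"
    using c2 t t' by (auto simp: list_all_iff)
  then show ?thesis by blast
qed

lemma inC_rep: "inC (rep k)" by (simp add: rep_def inC_def)

lemma pow_DirProd: "pow (G \<times>\<times> H) (a,b) (n::nat) = (pow G a n, pow H b n)"
  by (induction n) (simp_all add: nat_pow_def)

lemma pow_upd: "pow (G\<lparr>carrier := S\<rparr>) x (n::nat) = pow G x n"
  by (simp add: nat_pow_def)

lemma ord_upd: "group G \<Longrightarrow> group (G\<lparr>carrier := S\<rparr>) \<Longrightarrow> group.ord (G\<lparr>carrier := S\<rparr>) x = group.ord G x"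
  by (simp add: group.ord_def pow_upd)

lemma subgroup_pow: assumes "subgroup H G" "h \<in> H" shows "pow G h (n::nat) \<in> H"
proof (induction n)
  case 0 then show ?case using assms(1) by (simp add: nat_pow_def subgroup.one_closed)
next
  case (Suc n)
  have "pow G h (Suc n) = pow G h n \<otimes>\<^bsub>G\<^esub> h" by (simp add: nat_pow_def)
  then show ?case using Suc assms by (simp add: subgroup.m_closed)
qed



abbreviation "Bp p \<equiv> integer_mod_group p"

lemma conj_eq: fixes G (structure) assumes "group G" "r \<in> carrier G" "g \<in> carrier G" "y \<in> carrier G"
  "r \<otimes>\<^bsub>G\<^esub> g = g \<otimes>\<^bsub>G\<^esub> y"
  shows "r = g \<otimes>\<^bsub>G\<^esub> y \<otimes>\<^bsub>G\<^esub> inv\<^bsub>G\<^esub> g"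
proof -
  interpret group G by fact
  have "r = r \<otimes> (g \<otimes> inv g)" using assms(2-4) by simp
  also have "\<dots> = (r \<otimes> g) \<otimes> inv g" using assms(2-4) by (simp add: m_assoc)
  also have "\<dots> = (g \<otimes> y) \<otimes> inv g" by (simp only: assms(5))
  finally show ?thesis .
qed

theorem mainTheorem7:
  fixes p :: nat
  assumes "Factorial_Ring.prime p" and "coprime (120::nat) p"
  shows "psi_normal_divisible (SL2_mod 5 \<times>\<times> integer_mod_group p)"
  unfolding psi_normal_divisible_def
proof (intro allI impI)
  fix H assume nH: "H \<lhd> A \<times>\<times> Bp p"
  have p1: "p > 1" using assms(1) prime_gt_1_nat by blast
  have gA: "group A" by (rule groupA)
  have gB: "group (Bp p)" by simp
  have gG: "group (A \<times>\<times> Bp p)" by (simp add: DirProd_group gA)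
  interpret A: group A by (rule gA)
  interpret B: group "Bp p" by (rule gB)
  interpret G: group "A \<times>\<times> Bp p" by (rule gG)
  have carrB: "carrier (Bp p) = {0..<int p}" using p1 by (simp add: carrier_integer_mod_group)
  have sub: "subgroup H (A \<times>\<times> Bp p)" using nH by (rule normal_imp_subgroup)
  have Hsub: "H \<subseteq> carrier A \<times> carrier (Bp p)" using subgroup.subset[OF sub] by simp
  have oneH: "(\<one>\<^bsub>A\<^esub>, 0) \<in> H" using subgroup.one_closed[OF sub] by simp
  have g1: "gcd p 120 = 1" using assms(2) by (simp add: coprime_iff_gcd_eq_1 gcd.commute)
  obtain x1 y1 where xy1: "p * x1 = 120 * y1 + 1" using bezout_nat[of p 120] p1 g1 by auto
  have g2: "gcd 120 p = 1" using g1 by (simp add: gcd.commute)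
  obtain x2 y2 where xy2: "120 * x2 = p * y2 + 1" using bezout_nat[of 120 p] g2 by auto
  have a120: "a [^]\<^bsub>A\<^esub> (120::nat) = \<one>\<^bsub>A\<^esub>" if "a \<in> carrier A" for a
    using A.pow_order_eq_1[OF that] orderA by simp
  have powa1: "a [^]\<^bsub>A\<^esub> (p * x1) = a" if a: "a \<in> carrier A" for a
  proof -
    have "a [^]\<^bsub>A\<^esub> (p * x1) = a [^]\<^bsub>A\<^esub> (120 * y1) \<otimes>\<^bsub>A\<^esub> a [^]\<^bsub>A\<^esub> (1::nat)"
      using a xy1 by (simp add: A.nat_pow_mult)
    also have "a [^]\<^bsub>A\<^esub> (120 * y1) = \<one>\<^bsub>A\<^esub>"
      using a a120[OF a] by (simp add: A.nat_pow_pow[symmetric])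
    finally show ?thesis using a by simp
  qed
  have powa2: "a [^]\<^bsub>A\<^esub> (120 * x2) = \<one>\<^bsub>A\<^esub>" if a: "a \<in> carrier A" for a
    using a a120[OF a] by (simp add: A.nat_pow_pow[symmetric])
  have powb1: "b [^]\<^bsub>Bp p\<^esub> (p * x1) = 0" for b
    by simp
  have powb2: "b [^]\<^bsub>Bp p\<^esub> (120 * x2) = b" if b: "b \<in> carrier (Bp p)" for b
  proof -
    have "b [^]\<^bsub>Bp p\<^esub> (120 * x2) = (int (p * y2 + 1) * b) mod int p"
      by (simp only: pow_integer_mod_group xy2)
    also have "\<dots> = (b + int p * (int y2 * b)) mod int p" by (simp add: algebra_simps)
    also have "\<dots> = b mod int p" by simp
    also have "\<dots> = b" using b carrB by simp
    finally show ?thesis .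
  qed
  define H1 where "H1 = {a. (a, 0) \<in> H}"
  define H2 where "H2 = {b. (\<one>\<^bsub>A\<^esub>, b) \<in> H}"
  have memH: "(a,b) \<in> H \<longleftrightarrow> a \<in> H1 \<and> b \<in> H2" for a b
  proof
    assume ab: "(a,b) \<in> H"
    then have a: "a \<in> carrier A" and b: "b \<in> carrier (Bp p)" using Hsub by auto
    have "pow (A \<times>\<times> Bp p) (a,b) (p * x1) \<in> H" by (rule subgroup_pow[OF sub ab])
    then have "a \<in> H1" using powa1[OF a] powb1 by (simp add: pow_DirProd H1_def)
    moreover have "pow (A \<times>\<times> Bp p) (a,b) (120 * x2) \<in> H" by (rule subgroup_pow[OF sub ab])
    then have "b \<in> H2" using powa2[OF a] powb2[OF b] by (simp add: pow_DirProd H2_def)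
    ultimately show "a \<in> H1 \<and> b \<in> H2" by simp
  next
    assume "a \<in> H1 \<and> b \<in> H2"
    then have h: "(a,0) \<in> H" "(\<one>\<^bsub>A\<^esub>, b) \<in> H" by (auto simp: H1_def H2_def)
    then have a: "a \<in> carrier A" and b: "b \<in> carrier (Bp p)" using Hsub by auto
    have "(a,0) \<otimes>\<^bsub>A \<times>\<times> Bp p\<^esub> (\<one>\<^bsub>A\<^esub>, b) \<in> H" by (rule subgroup.m_closed[OF sub h(1) h(2)])
    moreover have "a \<otimes>\<^bsub>A\<^esub> \<one>\<^bsub>A\<^esub> = a" using A.r_one[OF a] .
    moreover have "b mod int p = b" using b carrB by simp
    ultimately show "(a,b) \<in> H" by simp
  qed
  have Heq: "H = H1 \<times> H2" using memH by auto
  have H1sub: "H1 \<subseteq> carrier A" using Hsub by (auto simp: H1_def)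
  have H2sub: "H2 \<subseteq> carrier (Bp p)" using Hsub by (auto simp: H2_def)
  have zB: "(0::int) \<in> carrier (Bp p)" by simp
  have sub1: "subgroup H1 A"
  proof (rule A.subgroupI[OF H1sub])
    show "H1 \<noteq> {}" using oneH unfolding H1_def by blast
  next
    fix a assume "a \<in> H1"
    then have h: "(a,0) \<in> H" and a: "a \<in> carrier A" using H1sub by (auto simp: H1_def)
    have "inv\<^bsub>A \<times>\<times> Bp p\<^esub> (a,0) \<in> H" using h by (rule subgroup.m_inv_closed[OF sub])
    then show "inv\<^bsub>A\<^esub> a \<in> H1" using a zB by (simp add: H1_def inv_DirProd)
  next
    fix a c assume "a \<in> H1" "c \<in> H1"
    then have "(a,0) \<in> H" "(c,0) \<in> H" by (auto simp: H1_def)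
    then have "(a,0) \<otimes>\<^bsub>A \<times>\<times> Bp p\<^esub> (c,0) \<in> H" by (rule subgroup.m_closed[OF sub])
    then show "a \<otimes>\<^bsub>A\<^esub> c \<in> H1" by (simp add: H1_def)
  qed
  have sub2: "subgroup H2 (Bp p)"
  proof (rule B.subgroupI[OF H2sub])
    show "H2 \<noteq> {}" using oneH unfolding H2_def by blast
  next
    fix b assume "b \<in> H2"
    then have h: "(\<one>\<^bsub>A\<^esub>,b) \<in> H" and b: "b \<in> carrier (Bp p)" using H2sub by (auto simp: H2_def)
    have "inv\<^bsub>A \<times>\<times> Bp p\<^esub> (\<one>\<^bsub>A\<^esub>,b) \<in> H" using h by (rule subgroup.m_inv_closed[OF sub])
    then show "inv\<^bsub>Bp p\<^esub> b \<in> H2" using b by (simp add: H2_def inv_DirProd del: inv_integer_mod_group)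
  next
    fix b c assume "b \<in> H2" "c \<in> H2"
    then have "(\<one>\<^bsub>A\<^esub>,b) \<in> H" "(\<one>\<^bsub>A\<^esub>,c) \<in> H" by (auto simp: H2_def)
    then have "(\<one>\<^bsub>A\<^esub>,b) \<otimes>\<^bsub>A \<times>\<times> Bp p\<^esub> (\<one>\<^bsub>A\<^esub>,c) \<in> H" by (rule subgroup.m_closed[OF sub])
    then show "b \<otimes>\<^bsub>Bp p\<^esub> c \<in> H2" by (simp add: H2_def del: mult_integer_mod_group)
  qed
  have conj1: "g \<otimes>\<^bsub>A\<^esub> y \<otimes>\<^bsub>A\<^esub> inv\<^bsub>A\<^esub> g \<in> H1" if g: "g \<in> carrier A" and y: "y \<in> H1" for g y
  proof -
    have "(g,0) \<otimes>\<^bsub>A \<times>\<times> Bp p\<^esub> (y,0) \<otimes>\<^bsub>A \<times>\<times> Bp p\<^esub> inv\<^bsub>A \<times>\<times> Bp p\<^esub> (g,0) \<in> H"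
      using normal.inv_op_closed2[OF nH, of "(g,0)" "(y,0)"] g y zB by (simp add: H1_def)
    then show ?thesis using g zB by (simp add: H1_def inv_DirProd)
  qed
  have pow1: "y [^]\<^bsub>A\<^esub> (n::nat) \<in> H1" if "y \<in> H1" for y n
    by (rule subgroup_pow[OF sub1 that])
  have toRep: "rep (ordc x) \<in> H1" if x: "x \<in> H1" for x
  proof -
    have xc: "x \<in> carrier A" using x H1sub by auto
    obtain g e h f where w: "inC g" "mm (rep (ordc x)) g = mm g (pw x e)" using wit[OF xc] by blast
    have gc: "g \<in> carrier A" using w carrA by simp
    have pe: "inC (pw x e)" using A.nat_pow_closed[OF xc, of e] by (simp add: powA carrA)
    have "rep (ordc x) = g \<otimes>\<^bsub>A\<^esub> x [^]\<^bsub>A\<^esub> e \<otimes>\<^bsub>A\<^esub> inv\<^bsub>A\<^esub> g"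
      by (rule conj_eq[OF gA]) (use w gc xc pe inC_rep carrA in \<open>auto simp: multA powA\<close>)
    then show ?thesis using conj1[OF gc pow1[OF x, where n=e]] by simp
  qed
  have fromRep: "x \<in> H1" if x: "x \<in> carrier A" and r: "rep (ordc x) \<in> H1" for x
  proof -
    obtain g e h f where w: "inC h" "mm x h = mm h (pw (rep (ordc x)) f)" using wit[OF x] by blast
    have hc: "h \<in> carrier A" using w carrA by simp
    have rc: "rep (ordc x) \<in> carrier A" using inC_rep carrA by simp
    have pf: "inC (pw (rep (ordc x)) f)" using A.nat_pow_closed[OF rc, of f] by (simp add: powA carrA)
    have "x = h \<otimes>\<^bsub>A\<^esub> (rep (ordc x)) [^]\<^bsub>A\<^esub> f \<otimes>\<^bsub>A\<^esub> inv\<^bsub>A\<^esub> h"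
      by (rule conj_eq[OF gA]) (use w hc x pf inC_rep carrA in \<open>auto simp: multA powA\<close>)
    then show ?thesis using conj1[OF hc pow1[OF r, where n=f]] by simp
  qed
  define Os where "Os = ordc ` H1"
  have H1eq: "H1 = set (filter (\<lambda>x. ordc x \<in> Os) L)"
  proof
    show "H1 \<subseteq> set (filter (\<lambda>x. ordc x \<in> Os) L)" using H1sub carrL by (auto simp: Os_def)
  next
    show "set (filter (\<lambda>x. ordc x \<in> Os) L) \<subseteq> H1"
    proof
      fix x assume "x \<in> set (filter (\<lambda>x. ordc x \<in> Os) L)"
      then obtain y where x: "x \<in> carrier A" and y: "y \<in> H1" "ordc x = ordc y"
        using carrL by (auto simp: Os_def)
      show "x \<in> H1" using fromRep[OF x] toRep[OF y(1)] y(2) by simp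
    qed
  qed
  have "Os \<subseteq> set OL"
  proof
    fix k assume "k \<in> Os"
    then obtain x where "x \<in> H1" "k = ordc x" by (auto simp: Os_def)
    then have "k \<in> set (map ordc L)" using H1sub carrL by auto
    then show "k \<in> set OL" by (simp only: c8)
  qed
  then have "Os \<in> Pow (set [1,2,3,4,5,6,10::nat])" using c10 by (simp only: Pow_iff set_simps insert_commute)
  then have "Os \<in> set ` set (subseqs [1,2,3,4,5,6,10::nat])" by (simp only: subseqs_powset)
  then obtain Ol where Ol: "Ol \<in> set (subseqs [1,2,3,4,5,6,10::nat])" "set Ol = Os"
    by blast
  have dL: "distinct (filter (\<lambda>x. ordc x \<in> Os) L)" using c5 by simp
  have "card H1 = length (filter (\<lambda>x. ordc x \<in> Os) L)" using dL by (simp only: H1eq distinct_card)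
  also have "\<dots> = length (filter (\<lambda>k. k \<in> set Ol) OL)"
    using Ol(2) by (simp add: c8[symmetric] comp_def)
  finally have cardH1: "card H1 = length (filter (\<lambda>k. k \<in> set Ol) OL)" .
  have "card H1 dvd 120" using A.lagrange[OF sub1] orderA by (metis dvd_triv_right)
  moreover have "1 \<in> set Ol"
  proof -
    have "\<one>\<^bsub>A\<^esub> \<in> H1" using oneH by (simp add: H1_def)
    moreover have "ordc \<one>\<^bsub>A\<^esub> = 1" using ordA[of "\<one>\<^bsub>A\<^esub>"] by simp
    ultimately show ?thesis using Ol(2) Os_def by force
  qed
  ultimately have Olc: "Ol = [1] \<or> Ol = [1,2] \<or> Ol = [1,2,3,4,5,6,10]"
  proof -
    assume d: "card H1 dvd 120" and o: "1 \<in> set Ol"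
    have m: "120 mod length (filter (\<lambda>k. k \<in> set Ol) OL) = 0"
      using d cardH1 by (simp only: dvd_eq_mod_eq_0[symmetric])
    show ?thesis using c7[rule_format, OF Ol(1) o m] .
  qed
  define sA where "sA = (\<lambda>S. \<Sum>x\<in>S. group.ord A x)"
  define sB where "sB = (\<lambda>S. \<Sum>x\<in>S. group.ord (Bp p) x)"
  have sAH1: "sA H1 = sum_list (filter (\<lambda>k. k \<in> set Ol) OL)"
  proof -
    have "sA H1 = (\<Sum>x\<in>H1. ordc x)" unfolding sA_def using H1sub by (intro sum.cong) (auto simp: ordA)
    also have "\<dots> = sum_list (map ordc (filter (\<lambda>x. ordc x \<in> Os) L))"
      using H1eq dL by (simp add: sum_list_distinct_conv_sum_set)
    also have "\<dots> = sum_list (filter (\<lambda>k. k \<in> set Ol) OL)"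
      using Ol(2) by (simp add: c8[symmetric] filter_map comp_def)
    finally show ?thesis .
  qed
  have sAA: "sA (carrier A) = 663"
  proof -
    have "sA (carrier A) = (\<Sum>x\<in>set L. ordc x)" unfolding sA_def carrL[symmetric] by (intro sum.cong) (auto simp: ordA)
    also have "\<dots> = sum_list OL" using c5 c8 by (simp add: sum_list_distinct_conv_sum_set[symmetric])
    finally show ?thesis using c9 by simp
  qed
  have dvd1: "sA H1 dvd sA (carrier A)"
    using Olc sAH1 sAA c9 by auto
  have orderB: "order (Bp p) = p" using carrB by (simp add: order_def)
  have "card H2 dvd p" using B.lagrange[OF sub2] orderB by (metis dvd_triv_right)
  then have "card H2 = 1 \<or> card H2 = p" using assms(1) by (simp add: prime_nat_iff)
  moreover have "0 \<in> H2" using oneH by (simp add: H2_def)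
  moreover have finB: "finite (carrier (Bp p))" using carrB by simp
  ultimately have H2c: "H2 = {0} \<or> H2 = carrier (Bp p)"
  proof (elim disjE)
    assume c1': "card H2 = 1" and z: "0 \<in> H2"
    obtain z' where "H2 = {z'}" using c1' by (rule card_1_singletonE)
    then have "H2 = {0}" using z by simp
    then show ?thesis by simp
  next
    assume "card H2 = p"
    moreover have "card (carrier (Bp p)) = p" using orderB by (simp add: order_def)
    ultimately have "H2 = carrier (Bp p)" using card_subset_eq[OF finB H2sub] by simp
    then show ?thesis by simp
  qed
  have dvd2: "sB H2 dvd sB (carrier (Bp p))"
  proof (cases "H2 = {0}")
    case True
    then have "sB H2 = 1" unfolding sB_def using B.ord_id by simp
    then show ?thesis by simp
  next
    case False then show ?thesis using H2c by simp
  qed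
  have ordG: "group.ord (A \<times>\<times> Bp p) (a,b) = group.ord A a * group.ord (Bp p) b"
    if a: "a \<in> carrier A" and b: "b \<in> carrier (Bp p)" for a b
  proof -
    have cop: "coprime (group.ord A a) (group.ord (Bp p) b)"
    proof (rule coprime_divisors[OF _ _ assms(2)])
      show "group.ord A a dvd 120" using ordA[OF a] c3x(3)[OF a] by simp
      show "group.ord (Bp p) b dvd p" using B.ord_dvd_group_order[OF b] orderB by simp
    qed
    have "(\<forall>n. pow (A \<times>\<times> Bp p) (a,b) n = \<one>\<^bsub>A \<times>\<times> Bp p\<^esub> \<longleftrightarrow> (group.ord A a * group.ord (Bp p) b) dvd n)"
    proof
      fix n
      have "pow (A \<times>\<times> Bp p) (a,b) n = \<one>\<^bsub>A \<times>\<times> Bp p\<^esub> \<longleftrightarrow> group.ord A a dvd n \<and> group.ord (Bp p) b dvd n"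
        using A.pow_eq_id[OF a, of n] B.pow_eq_id[OF b, of n] by (simp add: pow_DirProd del: pow_integer_mod_group)
      also have "\<dots> \<longleftrightarrow> (group.ord A a * group.ord (Bp p) b) dvd n"
        using cop by (meson divides_mult dvd_mult_left dvd_mult_right)
      finally show "pow (A \<times>\<times> Bp p) (a,b) n = \<one>\<^bsub>A \<times>\<times> Bp p\<^esub> \<longleftrightarrow> (group.ord A a * group.ord (Bp p) b) dvd n" .
    qed
    moreover have mem: "(a,b) \<in> carrier (A \<times>\<times> Bp p)" using a b by simp
    ultimately show ?thesis using G.ord_unique[OF mem, of "group.ord A a * group.ord (Bp p) b"] by blast
  qed
  have sumprod: "(\<Sum>x\<in>S1 \<times> S2. group.ord (A \<times>\<times> Bp p) x) = sA S1 * sB S2"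
    if s1: "S1 \<subseteq> carrier A" and s2: "S2 \<subseteq> carrier (Bp p)" for S1 S2
  proof -
    have "(\<Sum>x\<in>S1 \<times> S2. group.ord (A \<times>\<times> Bp p) x) = (\<Sum>(a,b)\<in>S1 \<times> S2. group.ord A a * group.ord (Bp p) b)"
    proof (rule sum.cong[OF refl])
      fix x assume xS: "x \<in> S1 \<times> S2"
      obtain a b where x0: "x = (a,b)" by (cases x)
      have ab: "a \<in> S1" "b \<in> S2" using xS x0 by auto
      have x: "x = (a,b)" "a \<in> carrier A" "b \<in> carrier (Bp p)" using x0 ab s1 s2 by auto
      then show "group.ord (A \<times>\<times> Bp p) x = (case x of (a,b) \<Rightarrow> group.ord A a * group.ord (Bp p) b)"
        using ordG[OF x(2) x(3)] by (simp only: x(1) prod.case)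
    qed
    also have "\<dots> = (\<Sum>a\<in>S1. \<Sum>b\<in>S2. group.ord A a * group.ord (Bp p) b)"
      by (simp add: sum.cartesian_product)
    also have "\<dots> = sA S1 * sB S2" by (simp add: sA_def sB_def sum_product)
    finally show ?thesis .
  qed
  have "psi ((A \<times>\<times> Bp p)\<lparr>carrier := H\<rparr>) = (\<Sum>x\<in>H1 \<times> H2. group.ord (A \<times>\<times> Bp p) x)"
    unfolding psi_def using ord_upd[OF gG subgroup.subgroup_is_group[OF sub gG]] by (simp add: Heq)
  also have "\<dots> = sA H1 * sB H2" using sumprod H1sub H2sub by simp
  finally have e1: "psi ((A \<times>\<times> Bp p)\<lparr>carrier := H\<rparr>) = sA H1 * sB H2" .
  have e2: "psi (A \<times>\<times> Bp p) = sA (carrier A) * sB (carrier (Bp p))"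
    unfolding psi_def using sumprod[of "carrier A" "carrier (Bp p)"] by simp
  show "psi ((A \<times>\<times> Bp p)\<lparr>carrier := H\<rparr>) dvd psi (A \<times>\<times> Bp p)"
    unfolding e1 e2 using dvd1 dvd2 by (rule mult_dvd_mono)
qed


end
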